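(* The function $f:(0,\infty)\to\mathbb{R}$, $f(x)=\sin(\log x)$, is amenable.
   Context: Relative distance on $\mathbb{R}$: $\mathrm{dist}(x,y)=0$ if $x=y=0$, $\mathrm{dist}(x,y)=|\log(y/x)|$ if $xy>0$, and $\mathrm{dist}(x,y)=\infty$ otherwise. For a real analytic function $f$ on an open set $\Omega\subseteq\mathbb{R}$, not identically zero, the condition number is $\kappa(f,x)=0$ if $x=0$, $\kappa(f,x)=\infty$ if $x\neq0$ and $f(x)=0$, and $\kappa(f,x)=|x|\,|f'(x)|/|f(x)|$ otherwise; $\mu(f,x)=1+\kappa(f,x)$. $f:\Omega\to\mathbb{R}$ is amenable if there is $C>0$ such that for every $x\in\Omega$ with $\kappa(f,x)<\infty$, the set $B_x=\{y\in\mathbb{R}:\mathrm{dist}(y,x)<1/(C\mu(f,x))\}$ is contained in $\Omega$ and $\mu(f,y)\leq C\mu(f,x)$ for all $y\in B_x$. *)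

theory Defs
  imports "HOL-Analysis.Analysis" "HOL-Library.Extended_Real"
begin

definition reldist :: "real \<Rightarrow> real \<Rightarrow> ereal" where
  "reldist x y =
     (if x = 0 \<and> y = 0 then 0
      else if x * y > 0 then ereal \<bar>ln (y / x)\<bar>
      else \<infinity>)"

definition kappa :: "(real \<Rightarrow> real) \<Rightarrow> real \<Rightarrow> ereal" where
  "kappa f x =
     (if x = 0 then 0
      else if f x = 0 then \<infinity>
      else ereal (\<bar>x\<bar> * \<bar>deriv f x\<bar> / \<bar>f x\<bar>))"

definition mu :: "(real \<Rightarrow> real) \<Rightarrow> real \<Rightarrow> ereal" where
  "mu f x = 1 + kappa f x"

definition amenable :: "(real \<Rightarrow> real) \<Rightarrow> real set \<Rightarrow> bool" where
  "amenable f \<Omega> \<longleftrightarrow>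
     (\<exists>C::real. C > 0 \<and>
        (\<forall>x\<in>\<Omega>. kappa f x < \<infinity> \<longrightarrow>
           (let B = {y. reldist y x < 1 / (ereal C * mu f x)} in
              B \<subseteq> \<Omega> \<and> (\<forall>y\<in>B. mu f y \<le> ereal C * mu f x))))"

end

theory Submission
  imports Defs
begin

lemma sin_lip: "\<bar>sin (s::real) - sin t\<bar> \<le> \<bar>s - t\<bar>"
proof -
  have "\<bar>sin s - sin t\<bar> = 2 * \<bar>sin ((s - t) / 2)\<bar> * \<bar>cos ((s + t) / 2)\<bar>"
    by (simp add: sin_diff_sin abs_mult)
  also have "\<dots> \<le> 2 * \<bar>(s - t) / 2\<bar> * 1"
    by (intro mult_mono abs_sin_x_le_abs_x) auto
  finally show ?thesis by simp
qed

lemma sc_ge1: "\<bar>sin (t::real)\<bar> + \<bar>cos t\<bar> \<ge> 1"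
proof -
  have "sin t ^ 2 \<le> \<bar>sin t\<bar>" "cos t ^ 2 \<le> \<bar>cos t\<bar>"
    using abs_sin_le_one[of t] abs_cos_le_one[of t]
    by (metis abs_ge_zero abs_le_square_iff abs_mult_self_eq abs_of_nonneg mult_left_le_one_le power2_eq_square power2_abs)+
  thus ?thesis using sin_cos_squared_add[of t] by linarith
qed

lemma key:
  fixes s t :: real
  assumes st: "sin t \<noteq> 0"
    and d: "\<bar>s - t\<bar> < 1 / (3 * (1 + \<bar>cos t\<bar> / \<bar>sin t\<bar>))"
  shows "sin s \<noteq> 0 \<and> 1 + \<bar>cos s\<bar> / \<bar>sin s\<bar> \<le> 3 * (1 + \<bar>cos t\<bar> / \<bar>sin t\<bar>)"
proof -
  define a where "a = \<bar>sin t\<bar>"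
  have a0: "a > 0" using st a_def by auto
  have m: "1 + \<bar>cos t\<bar> / \<bar>sin t\<bar> \<ge> 1 / a"
  proof -
    have "1 + \<bar>cos t\<bar> / \<bar>sin t\<bar> = (\<bar>sin t\<bar> + \<bar>cos t\<bar>) / a"
      using a0 a_def by (simp add: field_simps)
    thus ?thesis using sc_ge1[of t] a0 by (simp add: divide_right_mono)
  qed
  have "1 / (3 * (1 + \<bar>cos t\<bar> / \<bar>sin t\<bar>)) \<le> 1 / (3 * (1/a))"
  proof (rule divide_left_mono)
    show "3 * (1 / a) \<le> 3 * (1 + \<bar>cos t\<bar> / \<bar>sin t\<bar>)" using m by simp
    show "0 < 3 * (1 + \<bar>cos t\<bar> / \<bar>sin t\<bar>) * (3 * (1 / a))"
      using a0 by (intro mult_pos_pos) (auto intro: add_pos_nonneg)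
  qed simp
  hence d2: "\<bar>s - t\<bar> < a / 3" using d by simp
  have "\<bar>sin s\<bar> \<ge> a - \<bar>s - t\<bar>" using sin_lip[of s t] a_def by linarith
  hence b: "\<bar>sin s\<bar> \<ge> 2 * a / 3" using d2 by linarith
  hence sn: "sin s \<noteq> 0" using a0 by auto
  have "\<bar>cos s\<bar> / \<bar>sin s\<bar> \<le> 1 / \<bar>sin s\<bar>"
    using abs_cos_le_one[of s] sn by (simp add: divide_right_mono)
  also have "\<dots> \<le> 1 / (2 * a / 3)"
    using b a0 by (intro divide_left_mono) auto
  finally have "1 + \<bar>cos s\<bar> / \<bar>sin s\<bar> \<le> 1 + 3 / (2 * a)" by simp
  also have "\<dots> \<le> 3 * (1 / a)"
    proof -
    have "a \<le> 1" using a_def by simp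
    thus ?thesis using a0 by (simp add: field_simps)
  qed
  also have "\<dots> \<le> 3 * (1 + \<bar>cos t\<bar> / \<bar>sin t\<bar>)" using m by simp
  finally show ?thesis using sn by simp
qed

lemma deriv_f: "x > 0 \<Longrightarrow> deriv (\<lambda>x::real. sin (ln x)) x = cos (ln x) / x"
  by (rule DERIV_imp_deriv) (auto intro!: derivative_eq_intros simp: field_simps)

lemma kappa_f:
  assumes "x > 0" "sin (ln x) \<noteq> 0"
  shows "kappa (\<lambda>x::real. sin (ln x)) x = ereal (\<bar>cos (ln x)\<bar> / \<bar>sin (ln x)\<bar>)"
  using assms by (simp add: kappa_def deriv_f abs_divide)

lemma kappa_f_inf:
  assumes "x > 0" "sin (ln x) = 0"
  shows "kappa (\<lambda>x::real. sin (ln x)) x = \<infinity>"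
  using assms by (simp add: kappa_def)

theorem mainTheorem13:
  shows "amenable (\<lambda>x::real. sin (ln x)) {0<..}"
  unfolding amenable_def
proof (intro exI[of _ 3] conjI ballI impI)
  show "(3::real) > 0" by simp
  fix x :: real
  assume x: "x \<in> {0<..}" and k: "kappa (\<lambda>x. sin (ln x)) x < \<infinity>"
  have x0: "x > 0" using x by simp
  have sx: "sin (ln x) \<noteq> 0" using k kappa_f_inf[OF x0] by auto
  define m where "m = 1 + \<bar>cos (ln x)\<bar> / \<bar>sin (ln x)\<bar>"
  have m1: "m \<ge> 1" unfolding m_def by simp
  have mu: "mu (\<lambda>x. sin (ln x)) x = ereal m"
    by (simp add: mu_def kappa_f[OF x0 sx] m_def)
  have bnd: "1 / (ereal 3 * mu (\<lambda>x. sin (ln x)) x) = ereal (1 / (3 * m))"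
    using m1 by (simp add: mu one_ereal_def)
  have memB: "y > 0 \<and> \<bar>ln y - ln x\<bar> < 1 / (3 * m)"
    if "reldist y x < 1 / (ereal 3 * mu (\<lambda>x. sin (ln x)) x)" for y
  proof -
    have r: "reldist y x < ereal (1 / (3 * m))" using that bnd by simp
    have "y * x > 0"
    proof (rule ccontr)
      assume "\<not> y * x > 0"
      hence "reldist y x = \<infinity>" using x0 by (simp add: reldist_def)
      thus False using r by simp
    qed
    hence y0: "y > 0" using x0 by (simp add: zero_less_mult_iff)
    have "reldist y x = ereal \<bar>ln (x / y)\<bar>" using y0 x0 by (simp add: reldist_def)
    hence "\<bar>ln (x / y)\<bar> < 1 / (3 * m)" using r by simp
    moreover have "ln (x / y) = ln x - ln y" using x0 y0 by (simp add: ln_div)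
    ultimately show ?thesis using y0 by (simp add: abs_minus_commute)
  qed
  show "let B = {y. reldist y x < 1 / (ereal 3 * mu (\<lambda>x. sin (ln x)) x)}
        in B \<subseteq> {0<..} \<and> (\<forall>y\<in>B. mu (\<lambda>x. sin (ln x)) y \<le> ereal 3 * mu (\<lambda>x. sin (ln x)) x)"
    unfolding Let_def
  proof (intro conjI ballI subsetI)
    fix y assume "y \<in> {y. reldist y x < 1 / (ereal 3 * mu (\<lambda>x. sin (ln x)) x)}"
    thus "y \<in> {0<..}" using memB by auto
  next
    fix y assume "y \<in> {y. reldist y x < 1 / (ereal 3 * mu (\<lambda>x. sin (ln x)) x)}"
    hence y: "y > 0" "\<bar>ln y - ln x\<bar> < 1 / (3 * m)" using memB by auto
    from key[OF sx y(2)[unfolded m_def]]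
    have sy: "sin (ln y) \<noteq> 0" and le: "1 + \<bar>cos (ln y)\<bar> / \<bar>sin (ln y)\<bar> \<le> 3 * m"
      unfolding m_def by auto
    have "mu (\<lambda>x. sin (ln x)) y = ereal (1 + \<bar>cos (ln y)\<bar> / \<bar>sin (ln y)\<bar>)"
      by (simp add: mu_def kappa_f[OF y(1) sy] one_ereal_def)
    thus "mu (\<lambda>x. sin (ln x)) y \<le> ereal 3 * mu (\<lambda>x. sin (ln x)) x"
      using le by (simp add: mu)
  qed
qed

end
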